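(* Let $n\ge 2$, let $p \in B_n$, and let $C = C_{B_{n+1}}\big(d(p)\, \sigma_1\, \delta_{n+1}^{-1}\big)$ be the centralizer of $d(p)\sigma_1\delta_{n+1}^{-1}$ in $B_{n+1}$. Define $$c_1 = \Delta_{n+1}^2,\qquad c_2 = d(p)\, \sigma_2^{-1} \cdots \sigma_n^{-1},\qquad c_3 = \sigma_1 \sigma_2\cdots \sigma_{n-1}\sigma_n^2 \sigma_{n-1}\cdots \sigma_{1}.$$ Then $c_1,c_2,c_3 \in C$, and the subgroup $C' = \langle c_1,c_2,c_3\rangle$ of $B_{n+1}$ is abelian and hence has polynomial growth.
   Context: $B_m$ denotes the braid group on $m$ strands with Artin generators $\sigma_1,\dots,\sigma_{m-1}$ and relations $\sigma_i\sigma_j\sigma_i=\sigma_j\sigma_i\sigma_j$ for $|i-j|=1$, $\sigma_i\sigma_j=\sigma_j\sigma_i$ for $|i-j|>1$; $B_\infty$ is the braid group on generators $\sigma_1,\sigma_2,\dots$ with the same relations, and $B_m\subset B_{m+1}\subset B_\infty$ via the generators. The shift $d$ is the monomorphism of $B_\infty$ induced by $\sigma_{i_1}^{\varepsilon_1}\cdots\sigma_{i_k}^{\varepsilon_k}\mapsto \sigma_{i_1+1}^{\varepsilon_1}\cdots\sigma_{i_k+1}^{\varepsilon_k}$. In $B_{n+1}$: $\delta_{n+1} = \sigma_{n}\sigma_{n-1}\cdots\sigma_1$ and $\Delta_{n+1} = (\sigma_{n}\cdots\sigma_1)(\sigma_{n}\cdots\sigma_2)\cdots(\sigma_{n})$.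 *)

theory Defs
  imports "HOL-Algebra.Algebra"
begin

text \<open>Braid words: a letter (i, True) stands for sigma_i, (i, False) for sigma_i inverse.
  Only indices i >= 1 are used for braid elements.\<close>
type_synonym bword = "(nat \<times> bool) list"

inductive beq :: "bword \<Rightarrow> bword \<Rightarrow> bool" where
  beq_refl: "beq w w"
| beq_sym: "beq u v \<Longrightarrow> beq v u"
| beq_trans: "beq u v \<Longrightarrow> beq v w \<Longrightarrow> beq u w"
| beq_ctx: "beq u v \<Longrightarrow> beq (a @ u @ b) (a @ v @ b)"
| beq_cancel: "beq [(i, e), (i, \<not> e)] []"
| beq_braid: "Suc i = j \<or> Suc j = i \<Longrightarrow>
     beq [(i, True), (j, True), (i, True)] [(j, True), (i, True), (j, True)]"
| beq_far: "Suc i < j \<or> Suc j < i \<Longrightarrow> beq [(i, True), (j, True)] [(j, True), (i, True)]"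

definition brel :: "(bword \<times> bword) set" where
  "brel = {(u, v). beq u v}"

definition bclass :: "bword \<Rightarrow> bword set" where
  "bclass w = brel `` {w}"

definition bmult :: "bword set \<Rightarrow> bword set \<Rightarrow> bword set" where
  "bmult A1 A2 = bclass ((SOME u. u \<in> A1) @ (SOME v. v \<in> A2))"

definition B_inf :: "bword set monoid" where
  "B_inf = \<lparr> carrier = {bclass w | w. \<forall>x\<in>set w. 1 \<le> fst x},
             monoid.mult = bmult, one = bclass [] \<rparr>"

definition braid_group :: "nat \<Rightarrow> bword set monoid" where
  "braid_group m = B_inf\<lparr> carrier := {bclass w | w. \<forall>x\<in>set w. 1 \<le> fst x \<and> fst x < m} \<rparr>"

definition shift :: "bword set \<Rightarrow> bword set" where
  "shift A = bclass (map (\<lambda>(i, e). (Suc i, e)) (SOME w. w \<in> A))"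

definition sigma :: "nat \<Rightarrow> bword set" where
  "sigma i = bclass [(i, True)]"

definition delta :: "nat \<Rightarrow> bword set" where
  "delta m = bclass (map (\<lambda>i. (i, True)) (rev [1..<m]))"

definition Delta :: "nat \<Rightarrow> bword set" where
  "Delta m = bclass (concat (map (\<lambda>k. map (\<lambda>i. (i, True)) (rev [k..<m])) [1..<m]))"

definition centralizer :: "('a, 'b) monoid_scheme \<Rightarrow> 'a \<Rightarrow> 'a set" where
  "centralizer G x = {g \<in> carrier G. g \<otimes>\<^bsub>G\<^esub> x = x \<otimes>\<^bsub>G\<^esub> g}"

definition word_ball :: "('a, 'b) monoid_scheme \<Rightarrow> 'a set \<Rightarrow> nat \<Rightarrow> 'a set" where
  "word_ball G S r = {foldr (\<otimes>\<^bsub>G\<^esub>) xs \<one>\<^bsub>G\<^esub> | xs.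
      length xs \<le> r \<and> set xs \<subseteq> S \<union> (\<lambda>s. inv\<^bsub>G\<^esub> s) ` S}"

definition polynomial_growth :: "('a, 'b) monoid_scheme \<Rightarrow> 'a set \<Rightarrow> bool" where
  "polynomial_growth G S \<longleftrightarrow>
     (\<exists>K d. \<forall>r\<ge>1. finite (word_ball G S r) \<and> real (card (word_ball G S r)) \<le> K * real r ^ d)"

end

theory Submission imports Defs begin


definition sh :: "bword \<Rightarrow> bword" where "sh w = map (\<lambda>(i, e). (Suc i, e)) w"
definition winv :: "bword \<Rightarrow> bword" where "winv w = rev (map (\<lambda>(i, e). (i, \<not> e)) w)"
definition good :: "nat \<Rightarrow> bword \<Rightarrow> bool" where "good m w = (\<forall>x\<in>set w. 1 \<le> fst x \<and> fst x < m)"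

lemma chain: "beq a b \<Longrightarrow> beq b' c \<Longrightarrow> b = b' \<Longrightarrow> a' = a \<Longrightarrow> c = c' \<Longrightarrow> beq a' c'"
  by (metis beq_trans)

lemma beq_app: "beq u u' \<Longrightarrow> beq v v' \<Longrightarrow> beq (u @ v) (u' @ v')"
proof -
  assume a: "beq u u'" and b: "beq v v'"
  have h1: "beq ([] @ u @ v) ([] @ u' @ v)" by (rule beq_ctx[OF a])
  have h2: "beq (u' @ v @ []) (u' @ v' @ [])" by (rule beq_ctx[OF b])
  show ?thesis by (rule chain[OF h1 h2]) simp_all
qed

lemma beq_shift: "beq u v \<Longrightarrow> beq (sh u) (sh v)"
proof (induction rule: beq.induct)
  case (beq_ctx u v a b)
  then show ?case using beq.beq_ctx[OF beq_ctx.IH, of "sh a" "sh b"] by (simp add: sh_def)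
next
  case (beq_cancel i e)
  then show ?case using beq.beq_cancel[of "Suc i" e] by (simp add: sh_def)
next
  case (beq_braid i j)
  then show ?case using beq.beq_braid[of "Suc i" "Suc j"] by (simp add: sh_def)
next
  case (beq_far i j)
  then show ?case using beq.beq_far[of "Suc i" "Suc j"] by (simp add: sh_def)
next
  case (beq_refl w) then show ?case by (rule beq.beq_refl)
next
  case (beq_sym u v) show ?case by (rule beq.beq_sym[OF beq_sym.IH])
next
  case (beq_trans u v w) show ?case by (rule beq.beq_trans[OF beq_trans.IH])
qed

lemma beq_rev: "beq u v \<Longrightarrow> beq (rev u) (rev v)"
proof (induction rule: beq.induct)
  case (beq_ctx u v a b)
  then show ?case using beq.beq_ctx[OF beq_ctx.IH, of "rev b" "rev a"] by simp
next
  case (beq_cancel i e)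
  then show ?case using beq.beq_cancel[of i "\<not> e"] by simp
next
  case (beq_braid i j)
  then show ?case using beq.beq_braid[of i j] by simp
next
  case (beq_far i j)
  then show ?case using beq.beq_far[of i j] by (simp add: beq_sym)
next
  case (beq_refl w) then show ?case by (rule beq.beq_refl)
next
  case (beq_sym u v) show ?case by (rule beq.beq_sym[OF beq_sym.IH])
next
  case (beq_trans u v w) show ?case by (rule beq.beq_trans[OF beq_trans.IH])
qed

lemma winv_r: "beq (w @ winv w) []"
proof (induction w)
  case Nil then show ?case by (simp add: winv_def beq_refl)
next
  case (Cons x w)
  obtain i e where x: "x = (i, e)" by (cases x)
  have "beq ([x] @ (w @ winv w) @ [(i, \<not> e)]) ([x] @ [] @ [(i, \<not> e)])"
    by (rule beq_ctx[OF Cons.IH])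
  then have "beq (x # w @ winv (x # w)) [(i, e), (i, \<not> e)]" by (simp add: winv_def x)
  then show ?case using beq_trans[OF _ beq_cancel[of i e]] by simp
qed

lemma winv_winv [simp]: "winv (winv w) = w"
  by (induction w) (auto simp: winv_def rev_map)

lemma winv_l: "beq (winv w @ w) []"
  using winv_r[of "winv w"] by simp

lemma bclass_eq_set: "bclass w = {v. beq w v}"
  by (auto simp: bclass_def brel_def)

lemma in_bclass0: "u \<in> {v. beq u v}" by (simp add: beq_refl)

lemma bclass_eq: "bclass u = bclass v \<longleftrightarrow> beq u v"
proof
  assume "bclass u = bclass v"
  then have "v \<in> {x. beq u x}" using in_bclass0[of v] by (simp only: bclass_eq_set)
  then show "beq u v" by simp
next
  assume a: "beq u v"
  have "beq u x = beq v x" for x using a beq_sym beq_trans by metis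
  then show "bclass u = bclass v" by (simp add: bclass_eq_set)
qed

lemma in_bclass: "u \<in> bclass u"
  by (simp add: bclass_eq_set beq_refl)

lemma some_bclass: "beq u (SOME x. x \<in> bclass u)"
  using someI[of "\<lambda>x. x \<in> bclass u", OF in_bclass] by (simp add: bclass_eq_set)

lemma bmult_bclass: "bmult (bclass u) (bclass v) = bclass (u @ v)"
  unfolding bmult_def bclass_eq
  by (rule beq_sym, rule beq_app[OF some_bclass some_bclass])

lemma shift_bclass: "shift (bclass u) = bclass (sh u)"
  unfolding shift_def bclass_eq sh_def[symmetric]
  by (rule beq_sym, rule beq_shift[OF some_bclass])

lemma carrier_bg: "carrier (braid_group m) = {bclass w | w. good m w}"
  by (simp add: braid_group_def good_def)
lemma in_carrier_bg: "good m w \<Longrightarrow> bclass w \<in> carrier (braid_group m)"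
  by (auto simp: carrier_bg)
lemma mult_bg [simp]: "bclass u \<otimes>\<^bsub>braid_group m\<^esub> bclass v = bclass (u @ v)"
  by (simp add: braid_group_def B_inf_def bmult_bclass)
lemma one_bg: "\<one>\<^bsub>braid_group m\<^esub> = bclass []"
  by (simp add: braid_group_def B_inf_def)

lemma good_app [simp]: "good m (u @ v) = (good m u \<and> good m v)"
  by (auto simp: good_def)
lemma good_winv [simp]: "good m (winv w) = good m w"
  by (auto simp: good_def winv_def)

lemma group_bg: "group (braid_group m)"
proof (rule groupI)
  fix x y assume "x \<in> carrier (braid_group m)" "y \<in> carrier (braid_group m)"
  then obtain u v where "x = bclass u" "good m u" "y = bclass v" "good m v"
    unfolding carrier_bg by blast
  then show "x \<otimes>\<^bsub>braid_group m\<^esub> y \<in> carrier (braid_group m)"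
    using in_carrier_bg[of m "u @ v"] by simp
next
  show "\<one>\<^bsub>braid_group m\<^esub> \<in> carrier (braid_group m)"
    unfolding one_bg by (rule in_carrier_bg) (simp add: good_def)
next
  fix x y z assume "x \<in> carrier (braid_group m)" "y \<in> carrier (braid_group m)" "z \<in> carrier (braid_group m)"
  then obtain u v t where "x = bclass u" "y = bclass v" "z = bclass t"
    unfolding carrier_bg by blast
  then show "x \<otimes>\<^bsub>braid_group m\<^esub> y \<otimes>\<^bsub>braid_group m\<^esub> z = x \<otimes>\<^bsub>braid_group m\<^esub> (y \<otimes>\<^bsub>braid_group m\<^esub> z)"
    by simp
next
  fix x assume "x \<in> carrier (braid_group m)"
  then obtain u where "x = bclass u" unfolding carrier_bg by blast
  then show "\<one>\<^bsub>braid_group m\<^esub> \<otimes>\<^bsub>braid_group m\<^esub> x = x"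
    unfolding one_bg by simp
next
  fix x assume "x \<in> carrier (braid_group m)"
  then obtain w where w: "x = bclass w" "good m w" unfolding carrier_bg by blast
  have "bclass (winv w) \<in> carrier (braid_group m)" using w(2) by (intro in_carrier_bg) simp
  moreover have "bclass (winv w) \<otimes>\<^bsub>braid_group m\<^esub> x = \<one>\<^bsub>braid_group m\<^esub>"
    unfolding w(1) one_bg mult_bg bclass_eq by (rule winv_l)
  ultimately show "\<exists>y\<in>carrier (braid_group m). y \<otimes>\<^bsub>braid_group m\<^esub> x = \<one>\<^bsub>braid_group m\<^esub>"
    by blast
qed

lemma inv_bg: assumes "good m w" shows "inv\<^bsub>braid_group m\<^esub> (bclass w) = bclass (winv w)"
proof (rule group.inv_equality[OF group_bg])
  show "bclass (winv w) \<otimes>\<^bsub>braid_group m\<^esub> bclass w = \<one>\<^bsub>braid_group m\<^esub>"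
    unfolding one_bg mult_bg bclass_eq by (rule winv_l)
  show "bclass w \<in> carrier (braid_group m)" by (rule in_carrier_bg[OF assms])
  show "bclass (winv w) \<in> carrier (braid_group m)" using assms by (intro in_carrier_bg) simp
qed




definition dw :: "nat \<Rightarrow> bword" where "dw m = map (\<lambda>i. (i, True)) (rev [1..<Suc m])"
definition up :: "nat \<Rightarrow> bword" where "up m = map (\<lambda>i. (i, True)) [1..<Suc m]"
definition E :: "nat \<Rightarrow> bword" where
  "E m = concat (map (\<lambda>k. map (\<lambda>i. (i, True)) (rev [k..<Suc m])) [1..<Suc m])"

lemma dw_0 [simp]: "dw 0 = []" by (simp add: dw_def)
lemma dw_Suc: "dw (Suc m) = (Suc m, True) # dw m" by (simp add: dw_def)
lemma set_dw: "x \<in> set (dw m) \<Longrightarrow> snd x \<and> 1 \<le> fst x \<and> fst x \<le> m"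
  by (auto simp: dw_def)
lemma rev_dw: "rev (dw m) = up m" by (simp add: dw_def up_def rev_map)

lemma far: "(\<And>x. x \<in> set w \<Longrightarrow> snd x \<and> (Suc (fst x) < i \<or> Suc i < fst x))
   \<Longrightarrow> beq (w @ [(i, True)]) ((i, True) # w)"
proof (induction w)
  case Nil then show ?case by (simp add: beq_refl)
next
  case (Cons x w)
  obtain j e where x: "x = (j, e)" by (cases x)
  have e: "e" and ji: "Suc j < i \<or> Suc i < j" using Cons.prems[of x] x by auto
  have h1: "beq ([x] @ (w @ [(i, True)])) ([x] @ ((i, True) # w))"
    by (rule beq_app[OF beq_refl Cons.IH]) (use Cons.prems in auto)
  have h2: "beq ([x, (i, True)] @ w) ([(i, True), x] @ w)"
    by (rule beq_app[OF _ beq_refl]) (use beq_far[of j i] ji e x in auto)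
  show ?case by (rule chain[OF h1 h2]) simp_all
qed

lemma dw_shift: "2 \<le> i \<Longrightarrow> i \<le> m \<Longrightarrow> beq (dw m @ [(i, True)]) ((i - 1, True) # dw m)"
proof (induction m arbitrary: i)
  case 0 then show ?case by simp
next
  case (Suc m)
  show ?case
  proof (cases "i \<le> m")
    case True
    have h1: "beq ([(Suc m, True)] @ (dw m @ [(i, True)])) ([(Suc m, True)] @ ((i - 1, True) # dw m))"
      by (rule beq_app[OF beq_refl Suc.IH]) (use Suc.prems True in auto)
    have h2: "beq ([(Suc m, True), (i - 1, True)] @ dw m) ([(i - 1, True), (Suc m, True)] @ dw m)"
      by (rule beq_app[OF _ beq_refl]) (use beq_far[of "Suc m" "i - 1"] Suc.prems True in auto)
    show ?thesis by (rule chain[OF h1 h2]) (simp_all add: dw_Suc)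
  next
    case False
    then have i: "i = Suc m" using Suc.prems by auto
    then obtain k where m: "m = Suc k" using Suc.prems by (cases m) auto
    have h1: "beq ([(Suc (Suc k), True), (Suc k, True)] @ (dw k @ [(Suc (Suc k), True)]))
              ([(Suc (Suc k), True), (Suc k, True)] @ ((Suc (Suc k), True) # dw k))"
      by (rule beq_app[OF beq_refl far]) (auto dest: set_dw)
    have h2: "beq ([(Suc (Suc k), True), (Suc k, True), (Suc (Suc k), True)] @ dw k)
              ([(Suc k, True), (Suc (Suc k), True), (Suc k, True)] @ dw k)"
      by (rule beq_app[OF _ beq_refl]) (use beq_braid[of "Suc (Suc k)" "Suc k"] in auto)
    show ?thesis by (rule chain[OF h1 h2]) (simp_all add: dw_Suc i m)
  qed
qed

lemma up_shift: "2 \<le> i \<Longrightarrow> i \<le> m \<Longrightarrow> beq ((i, True) # up m) (up m @ [(i - 1, True)])"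
  using beq_rev[OF dw_shift[of i m]] by (simp add: rev_dw)

lemma inv_letter: assumes "beq (u @ [(i, True)]) ((j, True) # u)"
  shows "beq (u @ [(i, False)]) ((j, False) # u)"
proof -
  have c1: "beq [(i, True), (i, False)] []" using beq_cancel[of i True] by simp
  have c2: "beq [(j, False), (j, True)] []" using beq_cancel[of j False] by simp
  have s1: "beq ((j, False) # u @ [(i, True), (i, False)]) ((j, False) # u)"
    using beq_ctx[OF c1, of "(j, False) # u" "[]"] by simp
  have s2: "beq ((j, False) # u @ [(i, True), (i, False)]) ((j, False) # (j, True) # u @ [(i, False)])"
    using beq_ctx[OF assms, of "[(j, False)]" "[(i, False)]"] by simp
  have s3: "beq ((j, False) # (j, True) # u @ [(i, False)]) (u @ [(i, False)])"
    using beq_ctx[OF c2, of "[]" "u @ [(i, False)]"] by simp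
  have "beq ((j, False) # u) (u @ [(i, False)])"
    by (rule beq_trans[OF beq_sym[OF s1] beq_trans[OF s2 s3]])
  then show ?thesis by (rule beq_sym)
qed

lemma twist:
  assumes "\<And>i e. (i, e) \<in> set v \<Longrightarrow> beq (u @ [(i, True)]) ((f i, True) # u)"
  shows "beq (u @ v) (map (\<lambda>(i, e). (f i, e)) v @ u)"
  using assms
proof (induction v)
  case Nil then show ?case by (simp add: beq_refl)
next
  case (Cons x v)
  obtain i e where x: "x = (i, e)" by (cases x)
  have l: "beq (u @ [x]) ((f i, e) # u)"
    using Cons.prems[of i e] inv_letter[of u i "f i"] x by (cases e) auto
  have h1: "beq ((u @ [x]) @ v) (((f i, e) # u) @ v)" by (rule beq_app[OF l beq_refl])
  have h2: "beq ([(f i, e)] @ (u @ v)) ([(f i, e)] @ (map (\<lambda>(i, e). (f i, e)) v @ u))"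
    by (rule beq_app[OF beq_refl Cons.IH]) (use Cons.prems in auto)
  show ?case by (rule chain[OF h1 h2]) (simp_all add: x)
qed

lemma comm_word:
  assumes "\<And>i e. (i, e) \<in> set v \<Longrightarrow> beq (u @ [(i, True)]) ((i, True) # u)"
  shows "beq (u @ v) (v @ u)"
  using twist[of v u "\<lambda>i. i", OF assms] by (simp add: case_prod_beta')

lemma sh_app [simp]: "sh (u @ v) = sh u @ sh v" by (simp add: sh_def)
lemma sh_Cons [simp]: "sh ((i, e) # v) = (Suc i, e) # sh v" by (simp add: sh_def)
lemma sh_Nil [simp]: "sh [] = []" by (simp add: sh_def)

lemma E_0 [simp]: "E 0 = []" by (simp add: E_def)
lemma sh_pw: "sh (map (\<lambda>i. (i, True)) xs) = map (\<lambda>i. (i, True)) (map Suc xs)"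
  by (simp add: sh_def)

lemma gk: "map (\<lambda>i. (i, True)) (rev [Suc k..<Suc (Suc m)]) = sh (map (\<lambda>i. (i, True)) (rev [k..<Suc m]))"
proof -
  have "[Suc k..<Suc (Suc m)] = map Suc [k..<Suc m]" by (rule map_Suc_upt[symmetric])
  then show ?thesis by (simp only: sh_pw rev_map)
qed

lemma sh_concat: "sh (concat xss) = concat (map sh xss)"
  by (induction xss) auto

lemma E_Suc: "E (Suc m) = dw (Suc m) @ sh (E m)"
proof -
  have u: "[1..<Suc (Suc m)] = 1 # map Suc [1..<Suc m]"
    by (simp only: upt_conv_Cons[of 1 "Suc (Suc m)"] map_Suc_upt)
  have "E (Suc m) = dw (Suc m) @ concat (map (\<lambda>k. map (\<lambda>i. (i, True)) (rev [Suc k..<Suc (Suc m)])) [1..<Suc m])"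
    unfolding E_def u by (simp add: dw_def comp_def)
  also have "\<dots> = dw (Suc m) @ sh (E m)"
    unfolding gk E_def sh_concat by (simp add: comp_def)
  finally show ?thesis .
qed



lemma set_E: "x \<in> set (E m) \<Longrightarrow> snd x \<and> 1 \<le> fst x \<and> fst x \<le> m"
  by (auto simp: E_def)

lemma sh_dw: "sh (dw m) @ [(1, True)] = dw (Suc m)"
  by (induction m) (auto simp: dw_Suc)

lemma unsh: "map (\<lambda>(i, e). (i - 1, e)) (sh w) = w"
  by (induction w) (auto simp: sh_def)

lemma set_sh: "x \<in> set (sh w) \<Longrightarrow> \<exists>i. fst x = Suc i \<and> (i, snd x) \<in> set w"
  by (auto simp: sh_def)

lemma E_twist: "1 \<le> i \<Longrightarrow> i \<le> m \<Longrightarrow> beq (E m @ [(i, True)]) ((Suc m - i, True) # E m)"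
proof (induction m arbitrary: i)
  case 0 then show ?case by simp
next
  case (Suc m)
  show ?case
  proof (cases "i \<ge> 2")
    case True
    have "beq (sh (E m @ [(i - 1, True)])) (sh ((Suc m - (i - 1), True) # E m))"
      by (rule beq_shift, rule Suc.IH) (use True Suc.prems in auto)
    then have a: "beq (sh (E m) @ [(i, True)]) ((Suc (Suc m - (i - 1)), True) # sh (E m))"
      using True by simp
    have b: "beq (dw (Suc m) @ [(Suc (Suc m - (i - 1)), True)]) ((Suc m - (i - 1), True) # dw (Suc m))"
      using dw_shift[of "Suc (Suc m - (i - 1))" "Suc m"] True Suc.prems by auto
    have h1: "beq (dw (Suc m) @ (sh (E m) @ [(i, True)])) (dw (Suc m) @ ((Suc (Suc m - (i - 1)), True) # sh (E m)))"
      by (rule beq_app[OF beq_refl a])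
    have h2: "beq ((dw (Suc m) @ [(Suc (Suc m - (i - 1)), True)]) @ sh (E m)) (((Suc m - (i - 1), True) # dw (Suc m)) @ sh (E m))"
      by (rule beq_app[OF b beq_refl])
    have eqn: "Suc (Suc m) - i = Suc m - (i - 1)" using True by auto
    show ?thesis by (rule chain[OF h1 h2]) (simp_all add: E_Suc eqn)
  next
    case False
    then have i: "i = 1" using Suc.prems by auto
    show ?thesis
    proof (cases m)
      case 0 then show ?thesis by (simp add: i E_Suc dw_Suc beq_refl)
    next
      case (Suc k)
      have e: "E (Suc (Suc k)) = dw (Suc (Suc k)) @ sh (dw (Suc k)) @ sh (sh (E k))"
        by (simp add: E_Suc)
      have f: "beq (sh (sh (E k)) @ [(1, True)]) ((1, True) # sh (sh (E k)))"
      proof (rule far)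
        fix x assume x: "x \<in> set (sh (sh (E k)))"
        obtain j where j: "fst x = Suc j" "(j, snd x) \<in> set (sh (E k))" using set_sh[OF x] by auto
        obtain l where l: "j = Suc l" "(l, snd x) \<in> set (E k)" using set_sh[OF j(2)] by auto
        show "snd x \<and> (Suc (fst x) < 1 \<or> Suc 1 < fst x)" using set_E[OF l(2)] j l by auto
      qed
      have g0: "beq (dw (Suc (Suc k)) @ sh (dw (Suc k))) (map (\<lambda>(i, e). (i - 1, e)) (sh (dw (Suc k))) @ dw (Suc (Suc k)))"
      proof (rule twist)
        fix i e assume ie: "(i, e) \<in> set (sh (dw (Suc k)))"
        then obtain j where j: "i = Suc j" "(j, e) \<in> set (dw (Suc k))" using set_sh[OF ie] by auto
        have "1 \<le> j" "j \<le> Suc k" using set_dw[OF j(2)] by auto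
        then show "beq (dw (Suc (Suc k)) @ [(i, True)]) ((i - 1, True) # dw (Suc (Suc k)))"
          using dw_shift[of i "Suc (Suc k)"] j(1) by auto
      qed
      have g: "beq (dw (Suc (Suc k)) @ sh (dw (Suc k))) (dw (Suc k) @ dw (Suc (Suc k)))"
        using g0 unfolding unsh .
      have "beq ((dw (Suc (Suc k)) @ sh (dw (Suc k))) @ (sh (sh (E k)) @ [(1, True)]))
                ((dw (Suc (Suc k)) @ sh (dw (Suc k))) @ ((1, True) # sh (sh (E k))))"
        by (rule beq_app[OF beq_refl f])
      then have h: "beq (E (Suc (Suc k)) @ [(1, True)]) (dw (Suc (Suc k)) @ dw (Suc (Suc k)) @ sh (sh (E k)))"
        using e sh_dw[of "Suc k"] by (metis append_assoc append_Cons append_Nil)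
      have "beq ([(Suc (Suc k), True)] @ (dw (Suc (Suc k)) @ sh (dw (Suc k))) @ sh (sh (E k)))
                ([(Suc (Suc k), True)] @ (dw (Suc k) @ dw (Suc (Suc k))) @ sh (sh (E k)))"
        by (rule beq_ctx[OF g])
      then have h2: "beq ((Suc (Suc k), True) # E (Suc (Suc k))) (dw (Suc (Suc k)) @ dw (Suc (Suc k)) @ sh (sh (E k)))"
        using e by (simp add: dw_Suc[of "Suc k"])
      show ?thesis by (rule chain[OF h beq_sym[OF h2]]) (simp_all add: Suc i)
    qed
  qed
qed



lemma (in group) comm_gen_aux:
  assumes S: "S \<subseteq> carrier G" and T: "T \<subseteq> carrier G"
    and c: "\<And>a b. a \<in> S \<Longrightarrow> b \<in> T \<Longrightarrow> a \<otimes> b = b \<otimes> a"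
    and x: "x \<in> generate G S" and b: "b \<in> T"
  shows "x \<otimes> b = b \<otimes> x"
  using x
proof (induction x rule: generate.induct)
  case one then show ?case using b T by auto
next
  case (incl h) then show ?case using c b by auto
next
  case (inv h)
  have h: "h \<in> carrier G" and bc: "b \<in> carrier G" using inv S b T by auto
  have "inv h \<otimes> b = inv h \<otimes> (b \<otimes> h) \<otimes> inv h"
    using h bc by (simp add: m_assoc)
  also have "\<dots> = inv h \<otimes> (h \<otimes> b) \<otimes> inv h" using c[OF inv b] by simp
  also have "\<dots> = b \<otimes> inv h" using h bc by (simp add: m_assoc[symmetric])
  finally show ?case .
next
  case (eng h1 h2)
  have h: "h1 \<in> carrier G" "h2 \<in> carrier G" using eng.hyps S generate_in_carrier by auto
  have bc: "b \<in> carrier G" using b T by auto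
  have "h1 \<otimes> h2 \<otimes> b = h1 \<otimes> (b \<otimes> h2)" using h bc eng.IH by (simp add: m_assoc)
  also have "\<dots> = b \<otimes> (h1 \<otimes> h2)" using h bc eng.IH by (simp add: m_assoc[symmetric])
  finally show ?case .
qed

lemma (in group) comm_subgroup_generated:
  assumes S: "S \<subseteq> carrier G" and c: "\<And>a b. a \<in> S \<Longrightarrow> b \<in> S \<Longrightarrow> a \<otimes> b = b \<otimes> a"
  shows "comm_group (subgroup_generated G S)"
proof (rule group.group_comm_groupI)
  show "group (subgroup_generated G S)" by simp
next
  fix x y assume "x \<in> carrier (subgroup_generated G S)" "y \<in> carrier (subgroup_generated G S)"
  then have x: "x \<in> generate G S" and y: "y \<in> generate G S"
    using S by (auto simp: carrier_subgroup_generated Int_absorb1)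
  have gc: "generate G S \<subseteq> carrier G" using S generate_in_carrier by auto
  have "\<And>b. b \<in> generate G S \<Longrightarrow> \<forall>a\<in>S. b \<otimes> a = a \<otimes> b"
    using comm_gen_aux[OF S S] c by blast
  then have "y \<otimes> x = x \<otimes> y"
    using comm_gen_aux[OF S gc _ y x] by metis
  then show "x \<otimes>\<^bsub>subgroup_generated G S\<^esub> y = y \<otimes>\<^bsub>subgroup_generated G S\<^esub> x" by simp
qed

lemma (in group) pow_step:
  assumes y: "y \<in> carrier G" and Y: "Y \<in> carrier G"
  shows "y \<otimes> (y [^] (u::int) \<otimes> Y) = y [^] (1 + u) \<otimes> Y"
    and "inv y \<otimes> (y [^] (u::int) \<otimes> Y) = y [^] (-1 + u) \<otimes> Y"
proof -
  have e1: "y [^] (1 + u) = y [^] (1::int) \<otimes> y [^] u" by (rule int_pow_mult[OF y])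
  have e2: "y [^] (-1 + u) = y [^] (-1::int) \<otimes> y [^] u" by (rule int_pow_mult[OF y])
  have e3: "y [^] (-1::int) = inv y" using int_pow_neg[OF y, of 1] y by simp
  have e4: "y [^] (1::int) = y" using y by simp
  show "y \<otimes> (y [^] (u::int) \<otimes> Y) = y [^] (1 + u) \<otimes> Y"
    using y Y by (simp only: e1 e4 m_assoc int_pow_closed)
  show "inv y \<otimes> (y [^] (u::int) \<otimes> Y) = y [^] (-1 + u) \<otimes> Y"
    using y Y by (simp only: e2 e3 m_assoc int_pow_closed inv_closed)
qed

lemma (in comm_group) ball_aux:
  assumes a: "a \<in> carrier G" and b: "b \<in> carrier G" and c: "c \<in> carrier G"
    and xs: "set xs \<subseteq> {a, b, c} \<union> (\<lambda>s. inv s) ` {a, b, c}"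
  shows "\<exists>i j k::int. \<bar>i\<bar> \<le> int (length xs) \<and> \<bar>j\<bar> \<le> int (length xs) \<and> \<bar>k\<bar> \<le> int (length xs)
     \<and> foldr (\<otimes>) xs \<one> = a [^] i \<otimes> (b [^] j \<otimes> (c [^] k \<otimes> \<one>))"
  using xs
proof (induction xs)
  case Nil then show ?case by (intro exI[of _ 0]) (simp add: a b c)
next
  case (Cons x xs)
  then obtain i j k :: int where ijk: "\<bar>i\<bar> \<le> int (length xs)" "\<bar>j\<bar> \<le> int (length xs)" "\<bar>k\<bar> \<le> int (length xs)"
     and f: "foldr (\<otimes>) xs \<one> = a [^] i \<otimes> (b [^] j \<otimes> (c [^] k \<otimes> \<one>))" by auto
  have fx: "foldr (\<otimes>) (x # xs) \<one> = x \<otimes> (a [^] i \<otimes> (b [^] j \<otimes> (c [^] k \<otimes> \<one>)))"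
    using f by simp
  have ca: "a [^] i \<in> carrier G" and cb: "b [^] j \<in> carrier G" and cc: "c [^] k \<in> carrier G"
    using a b c by auto
  have ia: "inv a \<in> carrier G" and ib: "inv b \<in> carrier G" and ic: "inv c \<in> carrier G" using a b c by auto
  have "x \<in> {a, b, c} \<union> (\<lambda>s. inv s) ` {a, b, c}" using Cons.prems by auto
  then consider "x = a" | "x = b" | "x = c" | "x = inv a" | "x = inv b" | "x = inv c" by auto
  then show ?case
  proof cases
    case 1
    have "foldr (\<otimes>) (x # xs) \<one> = a [^] (1 + i) \<otimes> (b [^] j \<otimes> (c [^] k \<otimes> \<one>))"
      unfolding fx unfolding 1 by (rule pow_step(1)) (use a b c in auto)
    then show ?thesis using ijk by (intro exI[of _ "1 + i"] exI[of _ j] exI[of _ k]) auto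
  next
    case 4
    have "foldr (\<otimes>) (x # xs) \<one> = a [^] (-1 + i) \<otimes> (b [^] j \<otimes> (c [^] k \<otimes> \<one>))"
      unfolding fx unfolding 4 by (rule pow_step(2)) (use a b c in auto)
    then show ?thesis using ijk by (intro exI[of _ "-1 + i"] exI[of _ j] exI[of _ k]) auto
  next
    case 2
    have "foldr (\<otimes>) (x # xs) \<one> = a [^] i \<otimes> (b \<otimes> (b [^] j \<otimes> (c [^] k \<otimes> \<one>)))"
      unfolding fx unfolding 2 using a b c ca cb cc by (simp add: m_lcomm)
    also have "\<dots> = a [^] i \<otimes> (b [^] (1 + j) \<otimes> (c [^] k \<otimes> \<one>))"
      using pow_step(1)[OF b, of "c [^] k \<otimes> \<one>" j] cc by simp
    finally show ?thesis using ijk by (intro exI[of _ i] exI[of _ "1 + j"] exI[of _ k]) auto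
  next
    case 5
    have "foldr (\<otimes>) (x # xs) \<one> = a [^] i \<otimes> (inv b \<otimes> (b [^] j \<otimes> (c [^] k \<otimes> \<one>)))"
      unfolding fx unfolding 5 using a b c ca cb cc ib by (simp add: m_lcomm)
    also have "\<dots> = a [^] i \<otimes> (b [^] (-1 + j) \<otimes> (c [^] k \<otimes> \<one>))"
      using pow_step(2)[OF b, of "c [^] k \<otimes> \<one>" j] cc by simp
    finally show ?thesis using ijk by (intro exI[of _ i] exI[of _ "-1 + j"] exI[of _ k]) auto
  next
    case 3
    have "foldr (\<otimes>) (x # xs) \<one> = a [^] i \<otimes> (b [^] j \<otimes> (c \<otimes> (c [^] k \<otimes> \<one>)))"
      unfolding fx unfolding 3 using a b c ca cb cc by (simp add: m_lcomm)
    also have "\<dots> = a [^] i \<otimes> (b [^] j \<otimes> (c [^] (1 + k) \<otimes> \<one>))"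
      using pow_step(1)[OF c, of "\<one>" k] by simp
    finally show ?thesis using ijk by (intro exI[of _ i] exI[of _ j] exI[of _ "1 + k"]) auto
  next
    case 6
    have "foldr (\<otimes>) (x # xs) \<one> = a [^] i \<otimes> (b [^] j \<otimes> (inv c \<otimes> (c [^] k \<otimes> \<one>)))"
      unfolding fx unfolding 6 using a b c ca cb cc ic by (simp add: m_lcomm)
    also have "\<dots> = a [^] i \<otimes> (b [^] j \<otimes> (c [^] (-1 + k) \<otimes> \<one>))"
      using pow_step(2)[OF c, of "\<one>" k] by simp
    finally show ?thesis using ijk by (intro exI[of _ i] exI[of _ j] exI[of _ "-1 + k"]) auto
  qed
qed

lemma (in comm_group) poly_growth3:
  assumes a: "a \<in> carrier G" and b: "b \<in> carrier G" and c: "c \<in> carrier G"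
  shows "polynomial_growth G {a, b, c}"
  unfolding polynomial_growth_def
proof (rule exI[of _ 27], rule exI[of _ 3], intro allI impI conjI)
  fix r :: nat assume r: "r \<ge> 1"
  define I where "I = {-int r..int r}"
  define f where "f = (\<lambda>(i, j, k). a [^] (i::int) \<otimes> (b [^] (j::int) \<otimes> (c [^] (k::int) \<otimes> \<one>)))"
  have sub: "word_ball G {a, b, c} r \<subseteq> f ` (I \<times> I \<times> I)"
  proof
    fix y assume "y \<in> word_ball G {a, b, c} r"
    then obtain xs where y: "y = foldr (\<otimes>) xs \<one>" and l: "length xs \<le> r"
      and s: "set xs \<subseteq> {a, b, c} \<union> (\<lambda>s. inv s) ` {a, b, c}"
      unfolding word_ball_def by auto
    obtain i j k where "\<bar>i\<bar> \<le> int (length xs)" "\<bar>j\<bar> \<le> int (length xs)" "\<bar>k\<bar> \<le> int (length xs)"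
      "y = a [^] i \<otimes> (b [^] j \<otimes> (c [^] k \<otimes> \<one>))" using ball_aux[OF a b c s] y by auto
    then show "y \<in> f ` (I \<times> I \<times> I)" using l
      by (intro image_eqI[of _ _ "(i, j, k)"]) (auto simp: f_def I_def)
  qed
  have fin: "finite (f ` (I \<times> I \<times> I))" by (simp add: I_def)
  then show "finite (word_ball G {a, b, c} r)" using sub finite_subset by blast
  have "card (word_ball G {a, b, c} r) \<le> card (f ` (I \<times> I \<times> I))" by (rule card_mono[OF fin sub])
  also have "\<dots> \<le> card (I \<times> I \<times> I)" by (rule card_image_le) (simp add: I_def)
  also have "\<dots> = (2 * r + 1) ^ 3"
  proof -
    have "card I = 2 * r + 1" unfolding I_def by simp
    then show ?thesis by (simp add: card_cartesian_product power3_eq_cube)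
  qed
  finally have "real (card (word_ball G {a, b, c} r)) \<le> real ((2 * r + 1) ^ 3)" by linarith
  also have "\<dots> \<le> real ((3 * r) ^ 3)" using r by (intro of_nat_mono power_mono) auto
  also have "\<dots> = 27 * real r ^ 3" by (simp add: power_mult_distrib)
  finally show "real (card (word_ball G {a, b, c} r)) \<le> 27 * real r ^ 3" .
qed



lemma W3_eq: "1 \<le> n \<Longrightarrow> map (\<lambda>i. (i, True)) [1..<n] @ [(n, True), (n, True)] @ map (\<lambda>i. (i, True)) (rev [1..<n])
   = up n @ dw n"
  by (cases n) (auto simp: up_def dw_def)

lemma W3_comm: "2 \<le> i \<Longrightarrow> i \<le> n \<Longrightarrow> beq ((up n @ dw n) @ [(i, True)]) ((i, True) # up n @ dw n)"
proof -
  assume i: "2 \<le> i" "i \<le> n"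
  have h1: "beq (up n @ (dw n @ [(i, True)])) (up n @ ((i - 1, True) # dw n))"
    by (rule beq_app[OF beq_refl dw_shift[OF i]])
  have h2: "beq ((up n @ [(i - 1, True)]) @ dw n) (((i, True) # up n) @ dw n)"
    by (rule beq_app[OF beq_sym[OF up_shift[OF i]] beq_refl])
  show ?thesis by (rule chain[OF h1 h2]) simp_all
qed

lemma W1_comm: "1 \<le> i \<Longrightarrow> i \<le> n \<Longrightarrow> beq ((E n @ E n) @ [(i, True)]) ((i, True) # E n @ E n)"
proof -
  assume i: "1 \<le> i" "i \<le> n"
  have h1: "beq (E n @ (E n @ [(i, True)])) (E n @ ((Suc n - i, True) # E n))"
    by (rule beq_app[OF beq_refl E_twist[OF i]])
  have h2: "beq ((E n @ [(Suc n - i, True)]) @ E n) (((Suc n - (Suc n - i), True) # E n) @ E n)"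
    by (rule beq_app[OF E_twist beq_refl]) (use i in auto)
  have eqn: "Suc n - (Suc n - i) = i" using i by auto
  show ?thesis by (rule chain[OF h1 h2]) (simp_all add: eqn)
qed

lemma comm_class: "beq (u @ v) (v @ u) \<Longrightarrow>
  bclass u \<otimes>\<^bsub>braid_group m\<^esub> bclass v = bclass v \<otimes>\<^bsub>braid_group m\<^esub> bclass u"
  by (simp add: bclass_eq)

theorem proposition3:
  fixes n :: nat and p :: "bword set"
  assumes "n \<ge> 2" and "p \<in> carrier (braid_group n)"
  defines "B \<equiv> braid_group (n + 1)"
  defines "C \<equiv> centralizer B (shift p \<otimes>\<^bsub>B\<^esub> sigma 1 \<otimes>\<^bsub>B\<^esub> inv\<^bsub>B\<^esub> (delta (n + 1)))"
  defines "c1 \<equiv> Delta (n + 1) \<otimes>\<^bsub>B\<^esub> Delta (n + 1)"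
  defines "c2 \<equiv> shift p \<otimes>\<^bsub>B\<^esub> bclass (map (\<lambda>i. (i, False)) [2..<n + 1])"
  defines "c3 \<equiv> bclass (map (\<lambda>i. (i, True)) [1..<n] @ [(n, True), (n, True)]
                        @ map (\<lambda>i. (i, True)) (rev [1..<n]))"
  shows "c1 \<in> C \<and> c2 \<in> C \<and> c3 \<in> C
         \<and> comm_group (subgroup_generated B {c1, c2, c3})
         \<and> polynomial_growth (subgroup_generated B {c1, c2, c3}) {c1, c2, c3}"
proof -
  have n: "1 \<le> n" using assms(1) by auto
  obtain w where p: "p = bclass w" and gw: "good n w"
    using assms(2) unfolding carrier_bg by auto
  define R where "R = map (\<lambda>i. (i, False)) [2..<Suc n]"
  define W1 where "W1 = E n @ E n"
  define W2 where "W2 = sh w @ R"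
  define W3 where "W3 = up n @ dw n"
  have grp: "group B" unfolding B_def by (rule group_bg)
  have gdw: "good (Suc n) (dw n)" by (auto simp: good_def dw_def)
  have dl: "delta (n + 1) = bclass (dw n)" by (simp add: delta_def dw_def)
  have wi0: "winv (dw n) = map (\<lambda>i. (i, False)) [1..<Suc n]"
    by (simp add: winv_def dw_def rev_map comp_def)
  have u: "[1..<Suc n] = 1 # [2..<Suc n]"
    using upt_conv_Cons[of 1 "Suc n"] n by (simp del: upt_Suc add: numeral_2_eq_2)
  have wi: "winv (dw n) = (1, False) # R"
    unfolding wi0 R_def u by (simp only: list.map)
  have s1: "shift p = bclass (sh w)" by (simp only: p shift_bclass)
  have s2: "sigma 1 = bclass [(1, True)]" by (simp only: sigma_def)
  have i1: "inv\<^bsub>B\<^esub> (delta (n + 1)) = bclass ((1, False) # R)"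
    unfolding B_def dl using inv_bg[OF gdw] wi by (simp only: Suc_eq_plus1)
  have cc: "beq [(1, True), (1, False)] []" using beq_cancel[of 1 True] by simp
  have x: "shift p \<otimes>\<^bsub>B\<^esub> sigma 1 \<otimes>\<^bsub>B\<^esub> inv\<^bsub>B\<^esub> (delta (n + 1)) = bclass W2"
  proof -
    have "shift p \<otimes>\<^bsub>B\<^esub> sigma 1 \<otimes>\<^bsub>B\<^esub> inv\<^bsub>B\<^esub> (delta (n + 1))
        = bclass (sh w) \<otimes>\<^bsub>B\<^esub> bclass [(1, True)] \<otimes>\<^bsub>B\<^esub> bclass ((1, False) # R)"
      by (simp only: s1 s2 i1)
    also have "\<dots> = bclass ((sh w @ [(1, True)]) @ ((1, False) # R))"
      unfolding B_def by (simp only: mult_bg)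
    also have "\<dots> = bclass (sh w @ [] @ R)"
      unfolding bclass_eq using beq_ctx[OF cc, of "sh w" R] by simp
    finally show ?thesis by (simp add: W2_def)
  qed
  have e2: "c2 = bclass W2" unfolding c2_def B_def W2_def R_def
    by (simp only: s1 mult_bg Suc_eq_plus1)
  have e1: "c1 = bclass W1" unfolding c1_def B_def W1_def
    by (simp only: Delta_def E_def mult_bg Suc_eq_plus1)
  have e3: "c3 = bclass W3" unfolding c3_def W3_def using W3_eq[OF n] by simp
  have sW1: "\<And>x. x \<in> set W1 \<Longrightarrow> 1 \<le> fst x \<and> fst x \<le> n" unfolding W1_def using set_E by auto
  have sW3: "\<And>x. x \<in> set W3 \<Longrightarrow> 1 \<le> fst x \<and> fst x \<le> n" unfolding W3_def
    by (auto simp: up_def dw_def)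
  have sW2: "\<And>x. x \<in> set W2 \<Longrightarrow> 2 \<le> fst x \<and> fst x \<le> n" unfolding W2_def R_def
    using gw by (auto simp: good_def sh_def)
  have g1: "good (Suc n) W1" using sW1 by (force simp: good_def)
  have g2: "good (Suc n) W2" using sW2 by (force simp: good_def)
  have g3: "good (Suc n) W3" using sW3 by (force simp: good_def)
  have c12: "beq (W1 @ W2) (W2 @ W1)"
  proof (rule comm_word)
    fix i e assume ie: "(i, e) \<in> set W2"
    have "2 \<le> i" "i \<le> n" using sW2[OF ie] by auto
    then show "beq (W1 @ [(i, True)]) ((i, True) # W1)" unfolding W1_def using W1_comm[of i n] by simp
  qed
  have c13: "beq (W1 @ W3) (W3 @ W1)"
  proof (rule comm_word)
    fix i e assume ie: "(i, e) \<in> set W3"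
    have "1 \<le> i" "i \<le> n" using sW3[OF ie] by auto
    then show "beq (W1 @ [(i, True)]) ((i, True) # W1)" unfolding W1_def using W1_comm[of i n] by simp
  qed
  have c32: "beq (W3 @ W2) (W2 @ W3)"
  proof (rule comm_word)
    fix i e assume ie: "(i, e) \<in> set W2"
    have "2 \<le> i" "i \<le> n" using sW2[OF ie] by auto
    then show "beq (W3 @ [(i, True)]) ((i, True) # W3)" unfolding W3_def using W3_comm[of i n] by simp
  qed
  have in1: "c1 \<in> carrier B" and in2: "c2 \<in> carrier B" and in3: "c3 \<in> carrier B"
    using g1 g2 g3 e1 e2 e3 in_carrier_bg unfolding B_def by auto
  have m12: "c1 \<otimes>\<^bsub>B\<^esub> c2 = c2 \<otimes>\<^bsub>B\<^esub> c1" unfolding e1 e2 B_def by (rule comm_class[OF c12])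
  have m13: "c1 \<otimes>\<^bsub>B\<^esub> c3 = c3 \<otimes>\<^bsub>B\<^esub> c1" unfolding e1 e3 B_def by (rule comm_class[OF c13])
  have m32: "c3 \<otimes>\<^bsub>B\<^esub> c2 = c2 \<otimes>\<^bsub>B\<^esub> c3" unfolding e3 e2 B_def by (rule comm_class[OF c32])
  have xc: "shift p \<otimes>\<^bsub>B\<^esub> sigma 1 \<otimes>\<^bsub>B\<^esub> inv\<^bsub>B\<^esub> (delta (n + 1)) = c2" using x e2 by simp
  have C: "c1 \<in> C \<and> c2 \<in> C \<and> c3 \<in> C"
    unfolding C_def centralizer_def xc using in1 in2 in3 m12 m32 by auto
  have S: "{c1, c2, c3} \<subseteq> carrier B" using in1 in2 in3 by auto
  have cg: "comm_group (subgroup_generated B {c1, c2, c3})"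
    by (rule group.comm_subgroup_generated[OF grp S])
       (use m12 m13 m32 in auto)
  have "c1 \<in> carrier (subgroup_generated B {c1, c2, c3})"
       "c2 \<in> carrier (subgroup_generated B {c1, c2, c3})"
       "c3 \<in> carrier (subgroup_generated B {c1, c2, c3})"
    using S by (auto simp: carrier_subgroup_generated intro: generate.incl)
  then have pg: "polynomial_growth (subgroup_generated B {c1, c2, c3}) {c1, c2, c3}"
    by (rule comm_group.poly_growth3[OF cg])
  show ?thesis using C cg pg by blast
qed

end
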